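(* Let $(a^t)_{t\ge0}$ be a fixed sequence of numbers in $[0,1]$, and let $(R_t)_{t\ge0}$ be a sequence of non-negative integer-valued random variables such that: $R_0=0$; if $R_t\le 5$ then $R_{t+1}\le 6$ (otherwise arbitrary); and if $R_t\ge 6$, then, conditionally on the history up to time $t$, $R_{t+1}=R_t+1$ with probability $\frac35 a^t$, $R_{t+1}=R_t-4$ with probability $\frac25 a^t$, and $R_{t+1}=R_t-2$ with probability $1-a^t$. Then for all $i\ge 6$ and $t\ge0$, \[ \Pr[R_t=i]\le\Big(\frac23\Big)^{i-6}. \] *)

theory Defs
  imports "HOL-Probability.Probability"
begin

definition hist_event :: "'a measure \<Rightarrow> (nat \<Rightarrow> 'a \<Rightarrow> nat) \<Rightarrow> nat list \<Rightarrow> 'a set" where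
  "hist_event M R h = {\<omega> \<in> space M. \<forall>s<length h. R s \<omega> = h ! s}"

end

theory Submission
  imports Defs
begin

context prob_space begin

lemma hist_sets:
  assumes R: "\<And>t. R t \<in> measurable M (count_space UNIV)"
  shows "hist_event M R h \<in> events"
proof -
  have [measurable]: "R s \<in> measurable M (count_space UNIV)" for s using R .
  show ?thesis unfolding hist_event_def by measurable
qed

lemma lemA:
  assumes R: "\<And>t. R t \<in> measurable M (count_space UNIV)"
    and c: "c \<ge> 0"
    and H: "\<And>h. length h = Suc t \<Longrightarrow> h ! t = j \<Longrightarrow>
           measure M (hist_event M R h \<inter> {\<omega>. R (Suc t) \<omega> = k}) = c * measure M (hist_event M R h)"
  shows "measure M {\<omega>\<in>space M. R t \<omega> = j \<and> R (Suc t) \<omega> = k} = c * measure M {\<omega>\<in>space M. R t \<omega> = j}"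
proof -
  define I where "I = {h::nat list. length h = Suc t \<and> h ! t = j}"
  have cI: "countable I" by simp
  have U: "{\<omega>\<in>space M. R t \<omega> = j} = (\<Union>h\<in>I. hist_event M R h)"
  proof
    show "{\<omega>\<in>space M. R t \<omega> = j} \<subseteq> (\<Union>h\<in>I. hist_event M R h)"
    proof
      fix \<omega> assume w: "\<omega> \<in> {\<omega>\<in>space M. R t \<omega> = j}"
      let ?h = "map (\<lambda>s. R s \<omega>) [0..<Suc t]"
      have "?h \<in> I" using w unfolding I_def by (simp del: upt_Suc add: nth_append)
      moreover have "\<omega> \<in> hist_event M R ?h" using w unfolding hist_event_def by (simp del: upt_Suc)
      ultimately show "\<omega> \<in> (\<Union>h\<in>I. hist_event M R h)" by blast
    qed
  qed (auto simp: I_def hist_event_def)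
  have U2: "{\<omega>\<in>space M. R t \<omega> = j \<and> R (Suc t) \<omega> = k} = (\<Union>h\<in>I. hist_event M R h \<inter> {\<omega>. R (Suc t) \<omega> = k})"
    using U by blast
  have disj: "disjoint_family_on (\<lambda>h. hist_event M R h) I"
    unfolding disjoint_family_on_def
  proof (intro ballI impI)
    fix h1 h2 assume h: "h1 \<in> I" "h2 \<in> I" "h1 \<noteq> h2"
    then obtain s where "s < Suc t" "h1 ! s \<noteq> h2 ! s" unfolding I_def
      by (metis (mono_tags, lifting) mem_Collect_eq nth_equalityI)
    then show "hist_event M R h1 \<inter> hist_event M R h2 = {}"
      using h unfolding hist_event_def I_def by auto
  qed
  have disj2: "disjoint_family_on (\<lambda>h. hist_event M R h \<inter> {\<omega>. R (Suc t) \<omega> = k}) I"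
    using disj unfolding disjoint_family_on_def by blast
  have meas: "hist_event M R h \<in> events" for h using hist_sets[OF R] .
  have meas2: "hist_event M R h \<inter> {\<omega>. R (Suc t) \<omega> = k} \<in> events" for h
  proof -
    have "hist_event M R h \<inter> {\<omega>. R (Suc t) \<omega> = k} = hist_event M R h \<inter> (R (Suc t) -` {k} \<inter> space M)"
      unfolding hist_event_def by auto
    then show ?thesis using meas[of h] R[of "Suc t"] by (simp add: measurable_sets sets.Int)
  qed
  have "emeasure M {\<omega>\<in>space M. R t \<omega> = j \<and> R (Suc t) \<omega> = k}
      = (\<integral>\<^sup>+h. emeasure M (hist_event M R h \<inter> {\<omega>. R (Suc t) \<omega> = k}) \<partial>count_space I)"
    unfolding U2 by (rule emeasure_UN_countable[OF meas2 cI disj2])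
  also have "\<dots> = (\<integral>\<^sup>+h. ennreal c * emeasure M (hist_event M R h) \<partial>count_space I)"
    by (intro nn_integral_cong) (auto simp: emeasure_eq_measure H I_def c ennreal_mult)
  also have "\<dots> = ennreal c * (\<integral>\<^sup>+h. emeasure M (hist_event M R h) \<partial>count_space I)"
    by (rule nn_integral_cmult) simp
  also have "\<dots> = ennreal c * emeasure M {\<omega>\<in>space M. R t \<omega> = j}"
    unfolding U by (simp add: emeasure_UN_countable[OF meas cI disj])
  finally show ?thesis
    by (simp add: emeasure_eq_measure c ennreal_mult[symmetric] measure_nonneg)
qed


lemma trans_AE:
  assumes R: "\<And>t. R t \<in> measurable M (count_space UNIV)"
    and a: "0 \<le> a" "a \<le> 1" and j: "j \<ge> 6"
    and H1: "\<And>h. length h = Suc t \<Longrightarrow> h ! t = j \<Longrightarrow>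
           measure M (hist_event M R h \<inter> {\<omega>. R (Suc t) \<omega> = j + 1}) = 3/5 * a * measure M (hist_event M R h)"
    and H2: "\<And>h. length h = Suc t \<Longrightarrow> h ! t = j \<Longrightarrow>
           measure M (hist_event M R h \<inter> {\<omega>. R (Suc t) \<omega> = j - 4}) = 2/5 * a * measure M (hist_event M R h)"
    and H3: "\<And>h. length h = Suc t \<Longrightarrow> h ! t = j \<Longrightarrow>
           measure M (hist_event M R h \<inter> {\<omega>. R (Suc t) \<omega> = j - 2}) = (1 - a) * measure M (hist_event M R h)"
  shows "AE \<omega> in M. R t \<omega> = j \<longrightarrow> R (Suc t) \<omega> = j + 1 \<or> R (Suc t) \<omega> = j - 4 \<or> R (Suc t) \<omega> = j - 2"
proof -
  have [measurable]: "R s \<in> measurable M (count_space UNIV)" for s using R .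
  define N where "N = {\<omega>\<in>space M. R t \<omega> = j \<and> \<not> (R (Suc t) \<omega> = j + 1 \<or> R (Suc t) \<omega> = j - 4 \<or> R (Suc t) \<omega> = j - 2)}"
  define B where "B k = {\<omega>\<in>space M. R t \<omega> = j \<and> R (Suc t) \<omega> = k}" for k
  have NB[measurable]: "N \<in> events" "B k \<in> events" for k unfolding N_def B_def by measurable
  have A: "{\<omega>\<in>space M. R t \<omega> = j} = ((N \<union> B (j+1)) \<union> B (j-4)) \<union> B (j-2)"
    unfolding N_def B_def by auto
  have "measure M {\<omega>\<in>space M. R t \<omega> = j} = measure M N + measure M (B (j+1)) + measure M (B (j-4)) + measure M (B (j-2))"
  proof -
    have d1: "N \<inter> B (j+1) = {}" "(N \<union> B (j+1)) \<inter> B (j-4) = {}" "((N \<union> B (j+1)) \<union> B (j-4)) \<inter> B (j-2) = {}"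
      using j unfolding N_def B_def by auto
    show ?thesis unfolding A
      using finite_measure_Union[OF sets.Un[OF sets.Un[OF NB(1) NB(2)] NB(2)] NB(2) d1(3)]
        finite_measure_Union[OF sets.Un[OF NB(1) NB(2)] NB(2) d1(2)]
        finite_measure_Union[OF NB(1) NB(2) d1(1)] by simp
  qed
  moreover have "measure M (B (j+1)) = 3/5 * a * measure M {\<omega>\<in>space M. R t \<omega> = j}"
    unfolding B_def by (rule lemA[OF R _ H1]) (use a in auto)
  moreover have "measure M (B (j-4)) = 2/5 * a * measure M {\<omega>\<in>space M. R t \<omega> = j}"
    unfolding B_def by (rule lemA[OF R _ H2]) (use a in auto)
  moreover have "measure M (B (j-2)) = (1 - a) * measure M {\<omega>\<in>space M. R t \<omega> = j}"
    unfolding B_def by (rule lemA[OF R _ H3]) (use a in auto)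
  ultimately have "measure M N = 0" by (simp add: algebra_simps)
  then have "emeasure M N = 0" by (simp add: emeasure_eq_measure)
  then show ?thesis by (subst AE_iff_measurable[OF NB(1)]) (auto simp: N_def)
qed

end

theorem lemma5:
  fixes M :: "'a measure" and R :: "nat \<Rightarrow> 'a \<Rightarrow> nat" and a :: "nat \<Rightarrow> real"
  assumes "prob_space M"
    and "\<And>t. R t \<in> measurable M (count_space UNIV)"
    and "\<And>t. 0 \<le> a t \<and> a t \<le> 1"
    and "AE \<omega> in M. R 0 \<omega> = 0"
    and "\<And>t. AE \<omega> in M. R t \<omega> \<le> 5 \<longrightarrow> R (Suc t) \<omega> \<le> 6"
    and "\<And>t h. length h = Suc t \<Longrightarrow> h ! t \<ge> 6 \<Longrightarrow>
           measure M (hist_event M R h \<inter> {\<omega>. R (Suc t) \<omega> = h ! t + 1})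
             = 3/5 * a t * measure M (hist_event M R h)"
    and "\<And>t h. length h = Suc t \<Longrightarrow> h ! t \<ge> 6 \<Longrightarrow>
           measure M (hist_event M R h \<inter> {\<omega>. R (Suc t) \<omega> = h ! t - 4})
             = 2/5 * a t * measure M (hist_event M R h)"
    and "\<And>t h. length h = Suc t \<Longrightarrow> h ! t \<ge> 6 \<Longrightarrow>
           measure M (hist_event M R h \<inter> {\<omega>. R (Suc t) \<omega> = h ! t - 2})
             = (1 - a t) * measure M (hist_event M R h)"
  shows "\<forall>i\<ge>6. \<forall>t. measure M {\<omega> \<in> space M. R t \<omega> = i} \<le> (2/3) ^ (i - 6)"
proof -
  interpret prob_space M by fact
  note R = assms(2)
  have [measurable]: "R s \<in> measurable M (count_space UNIV)" for s using R .
  have tr: "AE \<omega> in M. R t \<omega> = j \<longrightarrow> R (Suc t) \<omega> = j + 1 \<or> R (Suc t) \<omega> = j - 4 \<or> R (Suc t) \<omega> = j - 2"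
    if j: "j \<ge> 6" for t j
    by (rule trans_AE[OF R _ _ j]) (use assms(3)[of t] assms(6)[of _ t] assms(7)[of _ t] assms(8)[of _ t] j in auto)
  have TR: "AE \<omega> in M. \<forall>t j. j \<ge> 6 \<longrightarrow> R t \<omega> = j \<longrightarrow> R (Suc t) \<omega> = j + 1 \<or> R (Suc t) \<omega> = j - 4 \<or> R (Suc t) \<omega> = j - 2"
    apply (subst AE_all_countable, intro allI, subst AE_all_countable, intro allI)
    subgoal for t j by (cases "6 \<le> j") (use tr in auto)
    done
  have LOW: "AE \<omega> in M. \<forall>t. R t \<omega> \<le> 5 \<longrightarrow> R (Suc t) \<omega> \<le> 6"
    using assms(5) by (simp add: AE_all_countable)
  let ?p = "\<lambda>t i. measure M {\<omega> \<in> space M. R t \<omega> = i}"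
  have "\<forall>i\<ge>6. ?p t i \<le> (2/3) ^ (i - 6)" for t
  proof (induction t)
    case 0
    have "?p 0 i = 0" if "i \<ge> 6" for i
    proof -
      have "AE \<omega> in M. \<not> R 0 \<omega> = i" using assms(4) by eventually_elim (use that in auto)
      from prob_eq_0_AE[OF this] show ?thesis .
    qed
    then show ?case by simp
  next
    case (Suc t)
    show ?case
    proof (intro allI impI)
      fix i :: nat assume i: "i \<ge> 6"
      show "?p (Suc t) i \<le> (2/3) ^ (i - 6)"
      proof (cases "i = 6")
        case True then show ?thesis by simp
      next
        case False
        then have i7: "i \<ge> 7" using i by simp
        define B where "B j = {\<omega>\<in>space M. R t \<omega> = j \<and> R (Suc t) \<omega> = i}" for j
        have [measurable]: "B j \<in> events" for j unfolding B_def by measurable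
        have "AE \<omega> in M. \<omega> \<in> {\<omega> \<in> space M. R (Suc t) \<omega> = i} \<longrightarrow> \<omega> \<in> (B (i-1) \<union> B (i+2)) \<union> B (i+4)"
          using TR LOW
        proof eventually_elim
          case (elim \<omega>)
          show ?case
          proof
            assume w: "\<omega> \<in> {\<omega> \<in> space M. R (Suc t) \<omega> = i}"
            have "\<not> R t \<omega> \<le> 5" using elim(2) w i7 by force
            then have "R t \<omega> \<ge> 6" by simp
            with elim(1) have "R (Suc t) \<omega> = R t \<omega> + 1 \<or> R (Suc t) \<omega> = R t \<omega> - 4 \<or> R (Suc t) \<omega> = R t \<omega> - 2" by blast
            then have "R t \<omega> = i - 1 \<or> R t \<omega> = i + 2 \<or> R t \<omega> = i + 4" using w \<open>R t \<omega> \<ge> 6\<close> by auto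
            then show "\<omega> \<in> (B (i-1) \<union> B (i+2)) \<union> B (i+4)" using w unfolding B_def by auto
          qed
        qed
        then have "?p (Suc t) i \<le> measure M ((B (i-1) \<union> B (i+2)) \<union> B (i+4))"
          by (intro finite_measure_mono_AE) auto
        also have "\<dots> \<le> measure M (B (i-1)) + measure M (B (i+2)) + measure M (B (i+4))"
        proof -
          have sa: "measure M (X \<union> Y) \<le> measure M X + measure M Y" if "X \<in> events" "Y \<in> events" for X Y
            using that by (intro measure_subadditive) auto
          have "prob (B (i-1) \<union> B (i+2) \<union> B (i+4)) \<le> prob (B (i-1) \<union> B (i+2)) + prob (B (i+4))"
            by (rule sa) auto
          moreover have "prob (B (i-1) \<union> B (i+2)) \<le> prob (B (i-1)) + prob (B (i+2))"
            by (rule sa) auto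
          ultimately show ?thesis by linarith
        qed
        also have "measure M (B (i-1)) = 3/5 * a t * ?p t (i-1)"
          unfolding B_def using i7 assms(3)[of t]
        proof (intro lemA[OF R])
          fix h :: "nat list" assume h: "length h = Suc t" "h ! t = i - 1"
          then have "i = h ! t + 1" using i7 by simp
          then show "prob (hist_event M R h \<inter> {\<omega>. R (Suc t) \<omega> = i}) = 3/5 * a t * prob (hist_event M R h)"
            using assms(6)[OF h(1)] h i7 by simp
        qed (use assms(3)[of t] in auto)
        also have "measure M (B (i+2)) = (1 - a t) * ?p t (i+2)"
          unfolding B_def using i7 assms(3)[of t]
          by (intro lemA[OF R]) (auto dest: assms(8)[of _ t])
        also have "measure M (B (i+4)) = 2/5 * a t * ?p t (i+4)"
          unfolding B_def using i7 assms(3)[of t]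
          by (intro lemA[OF R]) (auto dest: assms(7)[of _ t])
        finally have le: "?p (Suc t) i \<le> 3/5 * a t * ?p t (i-1) + (1 - a t) * ?p t (i+2) + 2/5 * a t * ?p t (i+4)" .
        define Q :: real where "Q = (2/3) ^ (i - 7)"
        have Q: "Q \<ge> 0" unfolding Q_def by simp
        have x1: "i - 1 - 6 = (i - 7)" "i + 2 - 6 = (i - 7) + 3" "i + 4 - 6 = (i - 7) + 5" "i - 6 = (i - 7) + 1"
          using i7 by auto
        have pw: "(2/3::real)^3 = 8/27" "(2/3::real)^5 = 32/243" by (simp_all add: power_divide)
        have e1: "?p t (i-1) \<le> Q" using Suc.IH[rule_format, of "i-1"] i7 unfolding Q_def x1(1) by simp
        have e2: "?p t (i+2) \<le> Q * (8/27)" using Suc.IH[rule_format, of "i+2"] i7 unfolding Q_def x1(2) power_add pw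
          by simp
        have e3: "?p t (i+4) \<le> Q * (32/243)" using Suc.IH[rule_format, of "i+4"] i7 unfolding Q_def x1(3) power_add pw
          by simp
        have goal: "(2/3) ^ (i - 6) = Q * (2/3)" unfolding Q_def x1(4) power_add by simp
        have "3/5 * a t * ?p t (i-1) + (1 - a t) * ?p t (i+2) + 2/5 * a t * ?p t (i+4)
            \<le> 3/5 * a t * Q + (1 - a t) * (Q * (8/27)) + 2/5 * a t * (Q * (32/243))"
          using assms(3)[of t] e1 e2 e3
          by (intro add_mono mult_left_mono) auto
        also have "\<dots> = Q * (3/5 * a t + (1 - a t) * (8/27) + 2/5 * a t * (32/243))"
          by (simp add: algebra_simps)
        also have "\<dots> \<le> Q * (2/3)"
        proof (rule mult_left_mono[OF _ Q])
          show "3/5 * a t + (1 - a t) * (8/27) + 2/5 * a t * (32/243) \<le> 2/3"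
            using conjunct1[OF assms(3)[of t]] conjunct2[OF assms(3)[of t]] by (simp add: field_simps)
        qed
        finally show ?thesis using le goal by linarith
      qed
    qed
  qed
  then show ?thesis by blast
qed

end
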